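(* Let $\mathbb{H}=\mathbb{R}$ or $\mathbb{C}$, let $x\in\mathbb{H}^d$, and let $\{W_n\}_{n=1}^{\infty}$ be independent random subspaces of $\mathbb{H}^d$. Fix $s>0$ and assume that each $W_n$ has the common Kaczmarz bound $\alpha_s$ of order $s$ with $0<\alpha_s<1$. Fix $\epsilon\ge 0$ and let $\epsilon_n\in W_n$ satisfy $\|\epsilon_n\|\le \epsilon$ for all $n$. Let $x_0^*\in\mathbb{H}^d$ be arbitrary and define, for $n\ge1$, the noisy measurements $y_n^*=P_{W_n}(x)+\epsilon_n$ and the iterates $$x_n^*=x_{n-1}^*+y_n^*-P_{W_n}(x_{n-1}^* ).$$ Then $$\text{for all } 0<s\le 1:\qquad \mathbb{E}\|x_n^*-x\|^{2s}\le \alpha_s^{ns}\|x_0^*-x\|^{2s}+\frac{1}{1-\alpha_s^s}\,\epsilon^{2s},$$ and $$\text{for all } s\ge 1:\qquad \left(\mathbb{E}\|x_n^*-x\|^{2s}\right)^{1/s}\le \alpha_s^{n}\|x_0^*-x\|^{2}+\frac{1}{1-\alpha_s}\,\epsilon^{2}.$$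
   Context: $\mathbb{H}^d$ is $\mathbb{R}^d$ or $\mathbb{C}^d$ with the standard inner product; $\mathbb{S}^{d-1}=\{u\in\mathbb{H}^d:\|u\|=1\}$; $P_W$ denotes the orthogonal projection onto a subspace $W$. A random subspace is a random variable taking values in the set of all linear subspaces of $\mathbb{H}^d$ (dimensions need not be fixed). For $s>0$, the Kaczmarz bound of order $s$ of a random subspace $W$ is $\alpha_s=\sup_{u\in\mathbb{S}^{d-1}}\left(\mathbb{E}\left[(1-\|P_W(u)\|^2)^s\right]\right)^{1/s}\in[0,1]$. *)

theory Defs
  imports "HOL-Probability.Probability"
begin

text \<open>The scalar field H is encoded by a set K of complex scalars: K = \<real> (real case)
  or K = UNIV (complex case).  H^d is the set of vectors in complex^'d whose coordinates
  lie in K.\<close>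

definition Hspace :: "complex set \<Rightarrow> (complex ^ 'd) set" where
  "Hspace K = {v. \<forall>i. v $ i \<in> K}"

definition hinner :: "complex ^ 'd \<Rightarrow> complex ^ 'd \<Rightarrow> complex" where
  "hinner x y = (\<Sum>i\<in>UNIV. x $ i * cnj (y $ i))"

definition Hsubspace :: "complex set \<Rightarrow> (complex ^ 'd) set \<Rightarrow> bool" where
  "Hsubspace K W \<longleftrightarrow> W \<subseteq> Hspace K \<and> 0 \<in> W \<and> (\<forall>v\<in>W. \<forall>w\<in>W. v + w \<in> W)
      \<and> (\<forall>c\<in>K. \<forall>v\<in>W. c *s v \<in> W)"

definition oproj :: "(complex ^ 'd) set \<Rightarrow> complex ^ 'd \<Rightarrow> complex ^ 'd" where
  "oproj W u = (THE w. w \<in> W \<and> (\<forall>v\<in>W. hinner (u - w) v = 0))"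

text \<open>Measurable space of all subspaces of H^d: the sigma-algebra generated by the maps
  W \<mapsto> P_W(u) (equivalently, by the entries of the projection matrix P_W).\<close>
definition subspaces :: "complex set \<Rightarrow> (complex ^ 'd) set measure" where
  "subspaces K = sigma {W. Hsubspace K W}
     {{W. Hsubspace K W \<and> oproj W u \<in> B} | u B. B \<in> sets borel}"

definition kaczmarz_bound ::
    "'w measure \<Rightarrow> complex set \<Rightarrow> real \<Rightarrow> ('w \<Rightarrow> (complex ^ 'd) set) \<Rightarrow> real" where
  "kaczmarz_bound M K s V =
     (SUP u\<in>{u\<in>Hspace K. norm u = 1}.
        (\<integral>\<omega>. (1 - (norm (oproj (V \<omega>) u))\<^sup>2) powr s \<partial>M) powr (1 / s))"

definition history ::
    "'w measure \<Rightarrow> complex set \<Rightarrow> (nat \<Rightarrow> 'w \<Rightarrow> (complex ^ 'd) set) \<Rightarrow> nat \<Rightarrow> 'w measure" where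
  "history M K W n = sigma (space M)
     (\<Union>k\<in>{1..n}. {W k -` A \<inter> space M | A. A \<in> sets (subspaces K)})"

end

theory Submission
  imports Defs
begin


lemma cscale: "r *\<^sub>R (z::complex) = of_real r * z" by (simp add: scaleR_conv_of_real)

lemma inner_hinner: "inner v w = Re (hinner v w)" for v w :: "complex ^ 'd"
  by (simp add: inner_vec_def hinner_def Re_sum inner_complex_def)

lemma hinner_self: "Re (hinner v v) = (norm v)^2" for v :: "complex ^ 'd"
  by (simp add: power2_norm_eq_inner inner_hinner)

lemma hinner_diff_left: "hinner (a - b) c = hinner a c - hinner b c"
  by (simp add: hinner_def algebra_simps sum_subtractf)

lemma hinner_add_left: "hinner (a + b) c = hinner a c + hinner b c"
  by (simp add: hinner_def algebra_simps sum.distrib)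

lemma hinner_scaleR_left: "hinner (r *\<^sub>R a) c = of_real r * hinner a c"
  by (simp add: hinner_def sum_distrib_left algebra_simps cscale)

lemma hinner_scaleR_right: "hinner c (r *\<^sub>R a) = of_real r * hinner c a"
  by (simp add: hinner_def sum_distrib_left algebra_simps cscale)

lemma scaleR_vec_eq: "(r::real) *\<^sub>R v = complex_of_real r *s v" for v :: "complex ^ 'd"
  by (simp add: vec_eq_iff cscale)

definition Q :: "(complex ^ 'd) set \<Rightarrow> complex ^ 'd \<Rightarrow> complex ^ 'd" where
  "Q W y = (\<Sum>i\<in>UNIV. Re (y $ i) *\<^sub>R oproj W (axis i 1) + Im (y $ i) *\<^sub>R oproj W (axis i \<i>))"

locale KK = fixes K :: "complex set" assumes K: "K = \<real> \<or> K = UNIV"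
begin

lemma real_in_K: "complex_of_real r \<in> K" using K by auto
lemma K_0[simp]: "0 \<in> K" using real_in_K[of 0] by simp
lemma K_1[simp]: "1 \<in> K" using real_in_K[of 1] by simp
lemma K_add: "a \<in> K \<Longrightarrow> b \<in> K \<Longrightarrow> a + b \<in> K" using K by auto
lemma K_minus: "a \<in> K \<Longrightarrow> b \<in> K \<Longrightarrow> a - b \<in> K" using K by auto
lemma K_mult: "a \<in> K \<Longrightarrow> b \<in> K \<Longrightarrow> a * b \<in> K" using K by auto

lemma Hspace_add: "u \<in> Hspace K \<Longrightarrow> v \<in> Hspace K \<Longrightarrow> u + v \<in> Hspace K"
  by (simp add: Hspace_def K_add)
lemma Hspace_diff: "u \<in> Hspace K \<Longrightarrow> v \<in> Hspace K \<Longrightarrow> u - v \<in> Hspace K"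
  by (simp add: Hspace_def K_minus)
lemma Hspace_scaleR: "u \<in> Hspace K \<Longrightarrow> r *\<^sub>R u \<in> Hspace K"
  by (simp add: Hspace_def cscale K_mult real_in_K)
lemma Hspace_0: "0 \<in> Hspace K" by (simp add: Hspace_def)
lemma Hspace_axis: "c \<in> K \<Longrightarrow> axis i c \<in> Hspace K"
  by (simp add: Hspace_def axis_def)

context fixes W assumes HW: "Hsubspace K W"
begin

lemma W_sub: "W \<subseteq> Hspace K" using HW by (simp add: Hsubspace_def)
lemma W_0: "0 \<in> W" using HW by (simp add: Hsubspace_def)
lemma W_add: "v \<in> W \<Longrightarrow> w \<in> W \<Longrightarrow> v + w \<in> W" using HW by (simp add: Hsubspace_def)
lemma W_scaleR: "v \<in> W \<Longrightarrow> r *\<^sub>R v \<in> W" using HW real_in_K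
  by (simp add: Hsubspace_def scaleR_vec_eq)
lemma W_diff: "v \<in> W \<Longrightarrow> w \<in> W \<Longrightarrow> v - w \<in> W"
  using W_add[of v "(-1) *\<^sub>R w"] W_scaleR[of w "-1"] by simp

lemma W_subspace: "subspace W"
  unfolding subspace_def using W_0 W_add W_scaleR by blast

lemma W_span: "span W = W" using W_subspace by (simp add: span_eq_iff)

lemma proj_unique:
  assumes "w \<in> W" "\<forall>v\<in>W. hinner (u - w) v = 0"
  shows "oproj W u = w"
  unfolding oproj_def
proof (rule the_equality)
  show "w \<in> W \<and> (\<forall>v\<in>W. hinner (u - w) v = 0)" using assms by blast
next
  fix w' assume w': "w' \<in> W \<and> (\<forall>v\<in>W. hinner (u - w') v = 0)"
  define d where "d = w - w'"
  have dW: "d \<in> W" using W_diff assms w' d_def by auto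
  have "hinner d d = hinner (u - w') d - hinner (u - w) d"
    by (simp add: d_def hinner_diff_left[symmetric] algebra_simps)
  also have "\<dots> = 0" using dW assms w' by simp
  finally have "(norm d)^2 = 0" using hinner_self[of d] by simp
  then show "w' = w" by (simp add: d_def)
qed

lemma proj_exists:
  assumes u: "u \<in> Hspace K"
  shows "oproj W u \<in> W \<and> (\<forall>v\<in>W. hinner (u - oproj W u) v = 0)"
proof -
  obtain y z where y: "y \<in> span W" and z: "\<And>w. w \<in> span W \<Longrightarrow> orthogonal z w" and uyz: "u = y + z"
    by (rule orthogonal_subspace_decomp_exists[of W u]) blast
  have yW: "y \<in> W" using y W_span by simp
  have zo: "hinner z v = 0" if v: "v \<in> W" for v
  proof (rule complex_eqI)
    have "inner z v = 0" using z[of v] v W_span by (simp add: orthogonal_def)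
    then show "Re (hinner z v) = Re 0" by (simp add: inner_hinner)
    show "Im (hinner z v) = Im 0"
      using K
    proof
      assume KR: "K = \<real>"
      have zH: "z \<in> Hspace K" using uyz u yW W_sub Hspace_diff[of u y] by (auto simp: algebra_simps)
      have vH: "v \<in> Hspace K" using v W_sub by auto
      have "hinner z v \<in> \<real>" unfolding hinner_def
        using zH vH KR by (auto simp: Hspace_def intro!: sum_in_Reals Reals_mult simp: Reals_cnj_iff)
      then show ?thesis by (simp add: complex_is_Real_iff)
    next
      assume KU: "K = UNIV"
      have "\<i> *s v \<in> W" using HW KU v by (simp add: Hsubspace_def)
      then have "inner z (\<i> *s v) = 0" using z[of "\<i> *s v"] W_span by (simp add: orthogonal_def)
      moreover have "hinner z (\<i> *s v) = - \<i> * hinner z v"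
        by (simp add: hinner_def sum_distrib_left algebra_simps)
      ultimately show ?thesis by (simp add: inner_hinner)
    qed
  qed
  have "oproj W u = y" using proj_unique[of y u] yW zo uyz by simp
  then show ?thesis using yW zo uyz by simp
qed

lemma P_in: "u \<in> Hspace K \<Longrightarrow> oproj W u \<in> W" using proj_exists by blast
lemma P_H: "u \<in> Hspace K \<Longrightarrow> oproj W u \<in> Hspace K" using P_in W_sub by blast
lemma P_orth: "u \<in> Hspace K \<Longrightarrow> v \<in> W \<Longrightarrow> hinner (u - oproj W u) v = 0"
  using proj_exists by blast
lemma P_orth_inner: "u \<in> Hspace K \<Longrightarrow> v \<in> W \<Longrightarrow> inner (u - oproj W u) v = 0"
  using P_orth by (simp add: inner_hinner)

lemma P_add: assumes "u \<in> Hspace K" "v \<in> Hspace K"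
  shows "oproj W (u + v) = oproj W u + oproj W v"
proof (rule proj_unique)
  show "oproj W u + oproj W v \<in> W" using assms P_in W_add by blast
  show "\<forall>w\<in>W. hinner (u + v - (oproj W u + oproj W v)) w = 0"
  proof
    fix w assume w: "w \<in> W"
    have "u + v - (oproj W u + oproj W v) = (u - oproj W u) + (v - oproj W v)" by simp
    then show "hinner (u + v - (oproj W u + oproj W v)) w = 0"
      using P_orth[OF assms(1) w] P_orth[OF assms(2) w] by (simp only: hinner_add_left) simp
  qed
qed

lemma P_scaleR: assumes "u \<in> Hspace K"
  shows "oproj W (r *\<^sub>R u) = r *\<^sub>R oproj W u"
proof (rule proj_unique)
  show "r *\<^sub>R oproj W u \<in> W" using assms P_in W_scaleR by blast
  show "\<forall>w\<in>W. hinner (r *\<^sub>R u - r *\<^sub>R oproj W u) w = 0"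
  proof
    fix w assume w: "w \<in> W"
    have "r *\<^sub>R u - r *\<^sub>R oproj W u = r *\<^sub>R (u - oproj W u)" by (simp add: algebra_simps)
    then show "hinner (r *\<^sub>R u - r *\<^sub>R oproj W u) w = 0"
      using P_orth[OF assms w] by (simp add: hinner_scaleR_left)
  qed
qed

lemma P_zero: "oproj W 0 = 0" using P_scaleR[OF Hspace_0, of 0] by simp

lemma P_diff: assumes "u \<in> Hspace K" "v \<in> Hspace K"
  shows "oproj W (u - v) = oproj W u - oproj W v"
proof -
  have "oproj W u = oproj W ((u - v) + v)" by simp
  also have "\<dots> = oproj W (u - v) + oproj W v" using assms Hspace_diff P_add by blast
  finally show ?thesis by simp
qed

lemma Hspace_sum: "finite A \<Longrightarrow> (\<forall>i\<in>A. f i \<in> Hspace K) \<Longrightarrow> sum f A \<in> Hspace K"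
  by (induction A rule: finite_induct) (auto simp: Hspace_0 Hspace_add)

lemma P_sum: "finite A \<Longrightarrow> (\<forall>i\<in>A. f i \<in> Hspace K) \<Longrightarrow> oproj W (sum f A) = (\<Sum>i\<in>A. oproj W (f i))"
  by (induction A rule: finite_induct) (auto simp: P_zero P_add Hspace_sum)

lemma pyth: assumes "u \<in> Hspace K"
  shows "(norm u)^2 = (norm (u - oproj W u))^2 + (norm (oproj W u))^2"
proof -
  have "orthogonal (u - oproj W u) (oproj W u)"
    using P_orth_inner[OF assms P_in[OF assms]] by (simp add: orthogonal_def)
  from norm_add_Pythagorean[OF this] show ?thesis by simp
qed

lemma Q_eq: assumes y: "y \<in> Hspace K" shows "Q W y = oproj W y"
proof -
  have ysum: "y = (\<Sum>i\<in>UNIV. axis i (y $ i))"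
    by (simp add: vec_eq_iff sum_component axis_def)
  have yi: "y $ i \<in> K" for i using y by (simp add: Hspace_def)
  have ax: "oproj W (axis i c) = Re c *\<^sub>R oproj W (axis i 1) + Im c *\<^sub>R oproj W (axis i \<i>)"
    if c: "c \<in> K" for i c
    using K
  proof
    assume KR: "K = \<real>"
    then have "Im c = 0" using c by (simp add: complex_is_Real_iff)
    then have "axis i c = Re c *\<^sub>R axis i 1"
      by (simp add: vec_eq_iff axis_def cscale complex_eq_iff)
    then show ?thesis using \<open>Im c = 0\<close> P_scaleR[OF Hspace_axis[OF K_1]] by simp
  next
    assume KU: "K = UNIV"
    have "axis i c = Re c *\<^sub>R axis i 1 + Im c *\<^sub>R axis i \<i>"
      by (simp add: vec_eq_iff axis_def cscale complex_eq_iff)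
    moreover have "axis i 1 \<in> Hspace K" "axis i \<i> \<in> Hspace K" using KU Hspace_axis by auto
    ultimately show ?thesis using P_add Hspace_scaleR P_scaleR by metis
  qed
  have "oproj W y = (\<Sum>i\<in>UNIV. oproj W (axis i (y $ i)))"
    by (subst ysum, rule P_sum) (auto intro: Hspace_axis yi)
  also have "\<dots> = Q W y" unfolding Q_def using ax[OF yi] by simp
  finally show ?thesis by simp
qed

end
end



lemma powr_subadd:
  fixes a b s :: real
  assumes a: "0 \<le> a" and b: "0 \<le> b" and s: "0 < s" "s \<le> 1"
  shows "(a + b) powr s \<le> a powr s + b powr s"
proof (cases "a + b = 0")
  case True then have "a = 0" "b = 0" using a b by auto
  then show ?thesis by simp
next
  case False
  define S where "S = a + b"
  have S: "S > 0" using False a b S_def by auto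
  have fa: "a / S \<le> (a / S) powr s"
  proof -
    have "(a / S) powr 1 \<le> (a / S) powr s"
      by (rule powr_mono') (use s a b S S_def in \<open>auto simp: field_simps\<close>)
    then show ?thesis using a S by simp
  qed
  have fb: "b / S \<le> (b / S) powr s"
  proof -
    have "(b / S) powr 1 \<le> (b / S) powr s"
      by (rule powr_mono') (use s a b S S_def in \<open>auto simp: field_simps\<close>)
    then show ?thesis using b S by simp
  qed
  have "1 = a / S + b / S" using S unfolding S_def by (simp add: add_divide_distrib[symmetric])
  also have "\<dots> \<le> (a / S) powr s + (b / S) powr s" using fa fb by simp
  also have "\<dots> = (a powr s + b powr s) / S powr s" by (simp only: powr_divide add_divide_distrib)
  finally have "1 \<le> (a powr s + b powr s) / S powr s" .
  moreover have "S powr s > 0" using S by simp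
  ultimately have "S powr s \<le> a powr s + b powr s" by (simp add: field_simps)
  then show ?thesis by (simp add: S_def)
qed

lemma powr_convex_split:
  fixes x y t s :: real
  assumes x: "0 \<le> x" and y: "0 \<le> y" and t: "0 < t" "t < 1" and s: "1 \<le> s"
  shows "(x + y) powr s \<le> (1 - t) powr (1 - s) * x powr s + t powr (1 - s) * y powr s"
proof -
  have t1: "1 \<le> t powr (1 - s)"
  proof -
    have "t powr 0 \<le> t powr (1 - s)" by (rule powr_mono') (use t s in auto)
    then show ?thesis using t by simp
  qed
  have t2: "1 \<le> (1 - t) powr (1 - s)"
  proof -
    have "(1 - t) powr 0 \<le> (1 - t) powr (1 - s)" by (rule powr_mono') (use t s in auto)
    then show ?thesis using t by simp
  qed
  show ?thesis
  proof (cases "x = 0")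
    case True
    have "y powr s \<le> t powr (1 - s) * y powr s" using t1 by (simp add: mult_le_cancel_right1)
    then show ?thesis using True by simp
  next
    case xn: False
    show ?thesis
    proof (cases "y = 0")
      case True
      have "x powr s \<le> (1 - t) powr (1 - s) * x powr s" using t2 by (simp add: mult_le_cancel_right1)
      then show ?thesis using True by simp
    next
      case yn: False
      have xp: "x > 0" using x xn by simp
      have yp: "y > 0" using y yn by simp
      have cv: "convex_on {0<..} (\<lambda>z::real. z powr s)" by (rule powr_convex[OF s])
      have "((1 - t) *\<^sub>R (x / (1 - t)) + t *\<^sub>R (y / t)) powr s
            \<le> (1 - t) * (x / (1 - t)) powr s + t * (y / t) powr s"
        by (rule convex_onD[OF cv]) (use t xp yp in auto)
      moreover have "(1 - t) *\<^sub>R (x / (1 - t)) + t *\<^sub>R (y / t) = x + y" using t by simp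
      moreover have "(1 - t) * (x / (1 - t)) powr s = (1 - t) powr (1 - s) * x powr s"
      proof -
        have "(1 - t) * (x / (1 - t)) powr s = (1 - t) powr 1 * x powr s / (1 - t) powr s"
          using t by (simp add: powr_divide)
        also have "\<dots> = (1 - t) powr (1 - s) * x powr s" using t by (simp add: powr_diff)
        finally show ?thesis .
      qed
      moreover have "t * (y / t) powr s = t powr (1 - s) * y powr s"
      proof -
        have "t * (y / t) powr s = t powr 1 * y powr s / t powr s"
          using t by (simp add: powr_divide)
        also have "\<dots> = t powr (1 - s) * y powr s" using t by (simp add: powr_diff)
        finally show ?thesis .
      qed
      ultimately show ?thesis by simp
    qed
  qed
qed

lemma powr_pick:
  fixes a c s :: real
  assumes a: "0 < a" and c: "0 < c"
  shows "(1 - c / (a + c)) powr (1 - s) * a powr s + (c / (a + c)) powr (1 - s) * c powr s = (a + c) powr s"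
proof -
  have e1: "1 - c / (a + c) = a / (a + c)" using a c by (simp add: field_simps)
  have k: "(z / (a + c)) powr (1 - s) * z powr s = z * (a + c) powr (s - 1)" if z: "0 < z" for z
  proof -
    have "(z / (a + c)) powr (1 - s) * z powr s = (z powr (1 - s) * z powr s) / (a + c) powr (1 - s)"
      by (simp add: powr_divide)
    also have "z powr (1 - s) * z powr s = z" using z by (simp add: powr_add[symmetric])
    also have "z / (a + c) powr (1 - s) = z * (a + c) powr (s - 1)"
    proof -
      have "(a + c) powr (1 - s) = inverse ((a + c) powr (s - 1))" using powr_minus[of "a + c" "s - 1"] by simp
      then show ?thesis by (simp add: divide_inverse)
    qed
    finally show ?thesis .
  qed
  have "(1 - c / (a + c)) powr (1 - s) * a powr s + (c / (a + c)) powr (1 - s) * c powr s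
        = a * (a + c) powr (s - 1) + c * (a + c) powr (s - 1)" using k[OF a] k[OF c] e1 by simp
  also have "\<dots> = (a + c) powr 1 * (a + c) powr (s - 1)" using a c by (simp add: algebra_simps)
  also have "\<dots> = (a + c) powr (1 + (s - 1))" by (simp only: powr_add)
  also have "\<dots> = (a + c) powr s" by simp
  finally show ?thesis .
qed




lemma powr_2s: fixes a s :: real shows "0 \<le> a \<Longrightarrow> a powr (2 * s) = (a\<^sup>2) powr s"
proof (cases "a = 0")
  case False
  assume "0 \<le> a" then have "a > 0" using False by simp
  have h: "a powr 2 = a\<^sup>2" using powr_realpow[OF \<open>a > 0\<close>, of 2] by simp
  have "(a\<^sup>2) powr s = (a powr 2) powr s" by (simp only: h)
  also have "\<dots> = a powr (2 * s)" by (simp add: powr_powr)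
  finally show ?thesis by simp
qed simp

lemma vec_nth_meas[measurable]: "(\<lambda>y::complex^'d. y $ i) \<in> borel_measurable borel"
  by (intro borel_measurable_continuous_onI continuous_on_component continuous_on_id)

lemma meas_lift: "space A = space B \<Longrightarrow> sets A \<subseteq> sets B \<Longrightarrow> f \<in> measurable A N \<Longrightarrow> f \<in> measurable B N"
  by (auto simp: measurable_def)

locale setting = KK K + prob_space M
  for K :: "complex set" and M :: "'w measure" +
  fixes W :: "nat \<Rightarrow> 'w \<Rightarrow> (complex ^ 'd) set" and s \<alpha> :: real
  assumes indep: "indep_vars (\<lambda>_. subspaces K) W {1..}"
    and s_pos: "s > 0"
    and kb: "\<forall>n\<ge>1. kaczmarz_bound M K s (W n) = \<alpha>"
begin

abbreviation "SS \<equiv> (subspaces K :: (complex ^ 'd) set measure)"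

lemma gen_Pow: "{{V. Hsubspace K V \<and> oproj V u \<in> B} | u B. B \<in> sets borel} \<subseteq> Pow {V :: (complex^'d) set. Hsubspace K V}"
  by auto

lemma space_S: "space SS = {V. Hsubspace K V}"
  unfolding subspaces_def by (simp add: space_measure_of_conv)

lemma sets_S: "sets SS = sigma_sets {V. Hsubspace K V} {{V. Hsubspace K V \<and> oproj V u \<in> B} | u B. B \<in> sets borel}"
  unfolding subspaces_def using gen_Pow by (simp add: sets_measure_of)

lemma oproj_meas[measurable]: "(\<lambda>V. oproj V u) \<in> borel_measurable SS"
proof (rule measurableI)
  fix A :: "(complex^'d) set" assume A: "A \<in> sets borel"
  have "(\<lambda>V. oproj V u) -` A \<inter> space SS = {V. Hsubspace K V \<and> oproj V u \<in> A}"
    by (auto simp: space_S)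
  also have "\<dots> \<in> sets SS" unfolding sets_S using A by (intro sigma_sets.Basic) blast
  finally show "(\<lambda>V. oproj V u) -` A \<inter> space SS \<in> sets SS" .
qed simp

lemma Q_meas: "(\<lambda>p. Q (snd p) (fst p)) \<in> borel_measurable (borel \<Otimes>\<^sub>M SS)"
proof -
  have o: "(\<lambda>x. oproj (snd x) u) \<in> borel_measurable (borel \<Otimes>\<^sub>M SS)" for u :: "complex^'d"
    using measurable_compose[OF measurable_snd oproj_meas] by simp
  have c: "(\<lambda>x. (fst x :: complex^'d) $ i) \<in> borel_measurable (borel \<Otimes>\<^sub>M SS)" for i
    by (rule measurable_compose[OF measurable_fst vec_nth_meas])
  have re: "(\<lambda>x. Re ((fst x :: complex^'d) $ i)) \<in> borel_measurable (borel \<Otimes>\<^sub>M SS)" for i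
    by (rule measurable_compose[OF c borel_measurable_Re])
  have im: "(\<lambda>x. Im ((fst x :: complex^'d) $ i)) \<in> borel_measurable (borel \<Otimes>\<^sub>M SS)" for i
    by (rule measurable_compose[OF c borel_measurable_Im])
  show ?thesis unfolding Q_def
    by (intro borel_measurable_sum borel_measurable_add borel_measurable_scaleR re im o)
qed

lemma W_meas: assumes "n \<ge> 1" shows "W n \<in> measurable M SS"
proof -
  have "\<forall>i\<in>{1..}. random_variable SS (W i)" using indep unfolding indep_vars_def2 by (elim conjE)
  then show ?thesis using assms by simp
qed

lemma W_Hs: "n \<ge> 1 \<Longrightarrow> \<omega> \<in> space M \<Longrightarrow> Hsubspace K (W n \<omega>)"
  using measurable_space[OF W_meas, of n \<omega>] space_S by simp

definition E where "E k = {W k -` A \<inter> space M | A. A \<in> sets SS}"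

lemma E_sub: "k \<ge> 1 \<Longrightarrow> E k \<subseteq> events"
  unfolding E_def by (auto intro: measurable_sets[OF W_meas])

lemma hist_gen: "(\<Union>k\<in>{1..n}. {W k -` A \<inter> space M | A. A \<in> sets SS}) \<subseteq> Pow (space M)"
  by auto

lemma hist_space: "space (history M K W n) = space M"
  unfolding history_def by (simp add: space_measure_of_conv)

lemma hist_sets: "sets (history M K W n) = sigma_sets (space M) (\<Union>k\<in>{1..n}. E k)"
  unfolding history_def E_def using hist_gen by (simp add: sets_measure_of)

lemma hist_sub: "sets (history M K W n) \<subseteq> sets M"
proof -
  have "(\<Union>k\<in>{1..n}. E k) \<subseteq> events"
  proof (rule UN_least)
    fix k assume "k \<in> {1..n}" then show "E k \<subseteq> events" by (intro E_sub) simp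
  qed
  then show ?thesis unfolding hist_sets by (rule sets.sigma_sets_subset)
qed

lemma hist_to_M: "f \<in> measurable (history M K W n) N \<Longrightarrow> f \<in> measurable M N"
  using meas_lift[OF hist_space hist_sub] .

lemma hist_mono: "m \<le> n \<Longrightarrow> f \<in> measurable (history M K W m) N \<Longrightarrow> f \<in> measurable (history M K W n) N"
proof (rule meas_lift)
  assume "m \<le> n"
  show "space (history M K W m) = space (history M K W n)" by (simp add: hist_space)
  show "sets (history M K W m) \<subseteq> sets (history M K W n)"
    unfolding hist_sets using \<open>m \<le> n\<close> by (intro sigma_sets_subseteq UN_mono) auto
qed

lemma W_hist: assumes "1 \<le> k" "k \<le> n" shows "W k \<in> measurable (history M K W n) SS"
proof (rule measurableI)
  fix x assume "x \<in> space (history M K W n)"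
  then have "x \<in> space M" by (simp only: hist_space)
  then show "W k x \<in> space SS" by (rule measurable_space[OF W_meas[OF assms(1)]])
next
  fix A assume "A \<in> sets SS"
  then have "W k -` A \<inter> space M \<in> E k" unfolding E_def by blast
  then have "W k -` A \<inter> space M \<in> (\<Union>k\<in>{1..n}. E k)" using assms by auto
  then have "W k -` A \<inter> space M \<in> sigma_sets (space M) (\<Union>k\<in>{1..n}. E k)"
    by (rule sigma_sets.Basic)
  then show "W k -` A \<inter> space (history M K W n) \<in> sets (history M K W n)"
    by (simp only: hist_sets hist_space)
qed

lemma E_Int_stable: "Int_stable (E k)"
proof (rule Int_stableI)
  fix a b assume "a \<in> E k" "b \<in> E k"
  then obtain A B where A: "A \<in> sets SS" "a = W k -` A \<inter> space M" and B: "B \<in> sets SS" "b = W k -` B \<inter> space M"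
    unfolding E_def by blast
  then have "a \<inter> b = W k -` (A \<inter> B) \<inter> space M" by auto
  moreover have "A \<inter> B \<in> sets SS" using A B by auto
  ultimately show "a \<inter> b \<in> E k" unfolding E_def by blast
qed

lemma indep_Y:
  fixes Y :: "'w \<Rightarrow> complex ^ 'd"
  assumes n: "n \<ge> 1" and Y: "Y \<in> borel_measurable (history M K W (n - 1))"
  shows "distr M borel Y \<Otimes>\<^sub>M distr M SS (W n) = distr M (borel \<Otimes>\<^sub>M SS) (\<lambda>x. (Y x, W n x))"
proof -
  have ind: "indep_sets E {1..}" using indep unfolding indep_vars_def2 E_def by (elim conjE)
  define I where "I = (\<lambda>b::bool. if b then {1..n-1} else {n})"
  have "indep_sets (\<lambda>b. sigma_sets (space M) (\<Union>i\<in>I b. E i)) UNIV"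
  proof (rule indep_sets_collect_sigma)
    show "indep_sets E (\<Union>j\<in>UNIV. I j)"
      by (rule indep_sets_mono_index[OF _ ind]) (use n in \<open>auto simp: I_def\<close>)
    show "Int_stable (E i)" for i by (rule E_Int_stable)
    show "disjoint_family_on I UNIV"
      unfolding disjoint_family_on_def I_def by auto
  qed
  then have ind2: "indep_set (sigma_sets (space M) (\<Union>i\<in>{1..n-1}. E i)) (sigma_sets (space M) (E n))"
    unfolding indep_set_def I_def
    by (rule indep_sets_mono_sets) (auto split: bool.split)
  have prodp: "prob (Y -` A \<inter> space M \<inter> (W n -` B \<inter> space M)) = prob (Y -` A \<inter> space M) * prob (W n -` B \<inter> space M)"
    if A: "A \<in> sets borel" and B: "B \<in> sets SS" for A B
  proof -
    have a: "Y -` A \<inter> space M \<in> sigma_sets (space M) (\<Union>i\<in>{1..n-1}. E i)"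
      using measurable_sets[OF Y A] hist_space[of "n-1"] hist_sets[of "n-1"] by auto
    have b: "W n -` B \<inter> space M \<in> sigma_sets (space M) (E n)"
      using B unfolding E_def by blast
    have "\<forall>a\<in>sigma_sets (space M) (\<Union>i\<in>{1..n-1}. E i). \<forall>b\<in>sigma_sets (space M) (E n). prob (a \<inter> b) = prob a * prob b"
      using ind2[unfolded indep_sets2_eq] by (elim conjE)
    then show ?thesis using a b by simp
  qed
  have rY: "random_variable borel Y" using hist_to_M[OF Y] .
  have rW: "random_variable SS (W n)" using W_meas[OF n] .
  have XY: "random_variable (borel \<Otimes>\<^sub>M SS) (\<lambda>x. (Y x, W n x))"
    using rY rW by (rule measurable_Pair)
  let ?S = "distr M borel Y" and ?T = "distr M SS (W n)" and ?J = "distr M (borel \<Otimes>\<^sub>M SS) (\<lambda>x. (Y x, W n x))"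
  interpret X: prob_space ?S by (rule prob_space_distr) fact
  interpret Y: prob_space ?T by (rule prob_space_distr) fact
  show ?thesis
  proof (rule pair_measure_eqI)
    show "sigma_finite_measure ?S" ..
    show "sigma_finite_measure ?T" ..
    fix A B assume A: "A \<in> sets ?S" and B: "B \<in> sets ?T"
    have "emeasure ?J (A \<times> B) = emeasure M ((\<lambda>x. (Y x, W n x)) -` (A \<times> B) \<inter> space M)"
      using A B by (intro emeasure_distr[OF XY]) auto
    also have "(\<lambda>x. (Y x, W n x)) -` (A \<times> B) \<inter> space M = Y -` A \<inter> space M \<inter> (W n -` B \<inter> space M)"
      by auto
    also have "emeasure M \<dots> = emeasure M (Y -` A \<inter> space M) * emeasure M (W n -` B \<inter> space M)"
      using prodp[of A B] A B by (simp add: emeasure_eq_measure measure_nonneg ennreal_mult)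
    also have "\<dots> = emeasure ?S A * emeasure ?T B"
      using rY rW A B by (simp add: emeasure_distr)
    finally show "emeasure ?S A * emeasure ?T B = emeasure ?J (A \<times> B)" by simp
  qed simp
qed

end



context setting begin

lemma Wn_oproj_meas: "n \<ge> 1 \<Longrightarrow> (\<lambda>\<omega>. oproj (W n \<omega>) u) \<in> borel_measurable M"
  by (rule measurable_compose[OF W_meas oproj_meas])

lemma f_meas: assumes "n \<ge> 1"
  shows "(\<lambda>\<omega>. (1 - (norm (oproj (W n \<omega>) u))\<^sup>2) powr s) \<in> borel_measurable M"
proof -
  have [measurable]: "(\<lambda>\<omega>. oproj (W n \<omega>) u) \<in> borel_measurable M" by (rule Wn_oproj_meas[OF assms])
  show ?thesis by measurable
qed

lemma Pu_le: assumes "n \<ge> 1" "\<omega> \<in> space M" "u \<in> Hspace K" "norm u = 1"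
  shows "(norm (oproj (W n \<omega>) u))\<^sup>2 \<le> 1"
proof -
  have "(norm u)\<^sup>2 = (norm (u - oproj (W n \<omega>) u))\<^sup>2 + (norm (oproj (W n \<omega>) u))\<^sup>2"
    by (rule pyth[OF W_Hs[OF assms(1,2)] assms(3)])
  moreover have "0 \<le> (norm (u - oproj (W n \<omega>) u))\<^sup>2" by simp
  moreover have "(norm u)\<^sup>2 = 1" using assms(4) by simp
  ultimately show ?thesis by linarith
qed

lemma f_bounds: assumes "n \<ge> 1" "\<omega> \<in> space M" "u \<in> Hspace K" "norm u = 1"
  shows "0 \<le> (1 - (norm (oproj (W n \<omega>) u))\<^sup>2) powr s \<and> (1 - (norm (oproj (W n \<omega>) u))\<^sup>2) powr s \<le> 1"
proof
  let ?a = "1 - (norm (oproj (W n \<omega>) u))\<^sup>2"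
  have h1: "0 \<le> ?a" using Pu_le[OF assms] by linarith
  have h2: "?a \<le> 1" by simp
  show "0 \<le> ?a powr s" by simp
  have "\<bar>?a\<bar> \<le> 1" using h1 h2 by linarith
  then show "?a powr s \<le> 1" by (rule powr_le1[rotated]) (use s_pos in linarith)
qed

lemma f_int: assumes "n \<ge> 1" "u \<in> Hspace K" "norm u = 1"
  shows "integrable M (\<lambda>\<omega>. (1 - (norm (oproj (W n \<omega>) u))\<^sup>2) powr s)"
  by (rule integrable_const_bound[where B=1]) (use f_bounds[OF assms(1) _ assms(2,3)] f_meas[OF assms(1)] in auto)

lemma f_int_le1: assumes "n \<ge> 1" "u \<in> Hspace K" "norm u = 1"
  shows "0 \<le> (\<integral>\<omega>. (1 - (norm (oproj (W n \<omega>) u))\<^sup>2) powr s \<partial>M) \<and> (\<integral>\<omega>. (1 - (norm (oproj (W n \<omega>) u))\<^sup>2) powr s \<partial>M) \<le> 1"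
proof
  show "0 \<le> (\<integral>\<omega>. (1 - (norm (oproj (W n \<omega>) u))\<^sup>2) powr s \<partial>M)"
    by (rule integral_nonneg_AE) (use f_bounds[OF assms(1) _ assms(2,3)] in auto)
  have "(\<integral>\<omega>. (1 - (norm (oproj (W n \<omega>) u))\<^sup>2) powr s \<partial>M) \<le> (\<integral>\<omega>. 1 \<partial>M)"
    by (rule integral_mono[OF f_int[OF assms]]) (use f_bounds[OF assms(1) _ assms(2,3)] in auto)
  then show "(\<integral>\<omega>. (1 - (norm (oproj (W n \<omega>) u))\<^sup>2) powr s \<partial>M) \<le> 1" by (simp add: prob_space)
qed

lemma kacz: assumes "n \<ge> 1" "u \<in> Hspace K" "norm u = 1"
  shows "(\<integral>\<omega>. (1 - (norm (oproj (W n \<omega>) u))\<^sup>2) powr s \<partial>M) \<le> \<alpha> powr s"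
proof -
  let ?F = "\<lambda>u. (\<integral>\<omega>. (1 - (norm (oproj (W n \<omega>) u))\<^sup>2) powr s \<partial>M) powr (1 / s)"
  let ?U = "{u \<in> Hspace K. norm u = 1}"
  have \<alpha>: "\<alpha> = (SUP u\<in>?U. ?F u)" using kb assms(1) unfolding kaczmarz_bound_def by simp
  have bdd: "bdd_above (?F ` ?U)"
  proof (rule bdd_aboveI[where M=1])
    fix x assume "x \<in> ?F ` ?U"
    then obtain v where v: "v \<in> Hspace K" "norm v = 1" "x = ?F v" by auto
    show "x \<le> 1" using f_int_le1[OF assms(1) v(1,2)] v(3) s_pos by (auto intro!: powr_le1)
  qed
  have le: "?F u \<le> \<alpha>" unfolding \<alpha> by (rule cSUP_upper[OF _ bdd]) (use assms in auto)
  have I0: "0 \<le> (\<integral>\<omega>. (1 - (norm (oproj (W n \<omega>) u))\<^sup>2) powr s \<partial>M)" using f_int_le1[OF assms] by simp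
  have "(\<integral>\<omega>. (1 - (norm (oproj (W n \<omega>) u))\<^sup>2) powr s \<partial>M) = (?F u) powr s"
    using I0 s_pos by (simp add: powr_powr)
  also have "\<dots> \<le> \<alpha> powr s" by (rule powr_mono2) (use s_pos le in auto)
  finally show ?thesis .
qed

end



context setting begin

lemma Q_zero: "Q V 0 = 0" by (simp add: Q_def)

lemma inner_bound: assumes n: "n \<ge> 1" and y: "y \<in> Hspace K"
  shows "(\<integral>\<^sup>+\<omega>. ennreal (norm (y - Q (W n \<omega>) y) powr (2 * s)) \<partial>M)
         \<le> ennreal (\<alpha> powr s) * ennreal (norm y powr (2 * s))"
proof (cases "y = 0")
  case True then show ?thesis by (simp add: Q_zero)
next
  case False
  define r where "r = norm y"
  have r: "r > 0" using False r_def by simp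
  define u where "u = (1 / r) *\<^sub>R y"
  have uH: "u \<in> Hspace K" unfolding u_def using y by (rule Hspace_scaleR)
  have un: "norm u = 1" using r unfolding u_def r_def by simp
  have yu: "y = r *\<^sub>R u" using r unfolding u_def by simp
  let ?f = "\<lambda>\<omega>. (1 - (norm (oproj (W n \<omega>) u))\<^sup>2) powr s"
  have pt: "ennreal (norm (y - Q (W n \<omega>) y) powr (2 * s)) = ennreal (r powr (2 * s)) * ennreal (?f \<omega>)"
    if \<omega>: "\<omega> \<in> space M" for \<omega>
  proof -
    have HW: "Hsubspace K (W n \<omega>)" by (rule W_Hs[OF n \<omega>])
    have "Q (W n \<omega>) y = oproj (W n \<omega>) y" by (rule Q_eq[OF HW y])
    also have "\<dots> = r *\<^sub>R oproj (W n \<omega>) u" unfolding yu by (rule P_scaleR[OF HW uH])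
    finally have "y - Q (W n \<omega>) y = r *\<^sub>R (u - oproj (W n \<omega>) u)" by (simp add: yu algebra_simps)
    then have "norm (y - Q (W n \<omega>) y) = r * norm (u - oproj (W n \<omega>) u)" using r by simp
    then have "norm (y - Q (W n \<omega>) y) powr (2 * s) = r powr (2 * s) * norm (u - oproj (W n \<omega>) u) powr (2 * s)"
      using r by (simp add: powr_mult)
    also have "norm (u - oproj (W n \<omega>) u) powr (2 * s) = ((norm (u - oproj (W n \<omega>) u))\<^sup>2) powr s"
      by (rule powr_2s) simp
    also have "(norm (u - oproj (W n \<omega>) u))\<^sup>2 = 1 - (norm (oproj (W n \<omega>) u))\<^sup>2"
      using pyth[OF HW uH] un by simp
    finally show ?thesis by (simp add: ennreal_mult)
  qed
  have "(\<integral>\<^sup>+\<omega>. ennreal (norm (y - Q (W n \<omega>) y) powr (2 * s)) \<partial>M)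
        = (\<integral>\<^sup>+\<omega>. ennreal (r powr (2 * s)) * ennreal (?f \<omega>) \<partial>M)"
    by (rule nn_integral_cong) (rule pt)
  also have "\<dots> = ennreal (r powr (2 * s)) * (\<integral>\<^sup>+\<omega>. ennreal (?f \<omega>) \<partial>M)"
    by (rule nn_integral_cmult) (use f_meas[OF n] in measurable)
  also have "(\<integral>\<^sup>+\<omega>. ennreal (?f \<omega>) \<partial>M) = ennreal (\<integral>\<omega>. ?f \<omega> \<partial>M)"
    by (rule nn_integral_eq_integral[OF f_int[OF n uH un]]) simp
  also have "ennreal (r powr (2 * s)) * ennreal (\<integral>\<omega>. ?f \<omega> \<partial>M) \<le> ennreal (r powr (2 * s)) * ennreal (\<alpha> powr s)"
    by (rule mult_left_mono) (use kacz[OF n uH un] in \<open>auto intro: ennreal_leI\<close>)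
  finally show ?thesis by (simp add: r_def mult.commute)
qed

lemma IND:
  fixes Y :: "'w \<Rightarrow> complex ^ 'd"
  assumes n: "n \<ge> 1" and Y: "Y \<in> borel_measurable (history M K W (n - 1))"
    and YH: "\<forall>\<omega>\<in>space M. Y \<omega> \<in> Hspace K"
  shows "(\<integral>\<^sup>+\<omega>. ennreal (norm (Y \<omega> - oproj (W n \<omega>) (Y \<omega>)) powr (2 * s)) \<partial>M)
         \<le> ennreal (\<alpha> powr s) * (\<integral>\<^sup>+\<omega>. ennreal (norm (Y \<omega>) powr (2 * s)) \<partial>M)"
proof -
  define h where "h = (\<lambda>p::(complex^'d) \<times> (complex^'d) set. ennreal (norm (fst p - Q (snd p) (fst p)) powr (2 * s)))"
  have QM[measurable]: "(\<lambda>p. Q (snd p) (fst p)) \<in> borel_measurable (borel \<Otimes>\<^sub>M SS)" by (rule Q_meas)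
  have hM: "h \<in> borel_measurable (borel \<Otimes>\<^sub>M SS)" unfolding h_def by measurable
  have rY: "Y \<in> borel_measurable M" by (rule hist_to_M[OF Y])
  have rW: "W n \<in> measurable M SS" by (rule W_meas[OF n])
  have XY: "(\<lambda>x. (Y x, W n x)) \<in> measurable M (borel \<Otimes>\<^sub>M SS)" using rY rW by (rule measurable_Pair)
  let ?PY = "distr M borel Y" and ?PW = "distr M SS (W n)"
  interpret PW: prob_space ?PW by (rule prob_space_distr[OF rW])
  have setsP: "sets (?PY \<Otimes>\<^sub>M ?PW) = sets (borel \<Otimes>\<^sub>M SS)"
    by (rule sets_pair_measure_cong) simp_all
  have hM': "h \<in> borel_measurable (?PY \<Otimes>\<^sub>M ?PW)"
    using hM measurable_cong_sets[OF setsP refl] by simp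
  define g where "g = (\<lambda>y. \<integral>\<^sup>+\<omega>. h (y, W n \<omega>) \<partial>M)"
  have g_eq: "(\<integral>\<^sup>+V. h (y, V) \<partial>?PW) = g y" for y
  proof -
    have "(\<lambda>V. h (y, V)) \<in> borel_measurable SS"
      by (rule measurable_Pair2[OF hM]) simp
    then have "(\<lambda>V. h (y, V)) \<in> borel_measurable ?PW" by simp
    then show ?thesis unfolding g_def by (rule nn_integral_distr[OF rW])
  qed
  have gM: "g \<in> borel_measurable borel"
  proof -
    have "(\<lambda>y. \<integral>\<^sup>+V. h (y, V) \<partial>?PW) \<in> borel_measurable ?PY"
      by (rule PW.borel_measurable_nn_integral_fst[OF hM'])
    then have "g \<in> borel_measurable ?PY" using g_eq by simp
    then show ?thesis by simp
  qed
  have "(\<integral>\<^sup>+\<omega>. ennreal (norm (Y \<omega> - oproj (W n \<omega>) (Y \<omega>)) powr (2 * s)) \<partial>M)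
        = (\<integral>\<^sup>+\<omega>. h (Y \<omega>, W n \<omega>) \<partial>M)"
  proof (rule nn_integral_cong)
    fix \<omega> assume \<omega>: "\<omega> \<in> space M"
    have "Q (W n \<omega>) (Y \<omega>) = oproj (W n \<omega>) (Y \<omega>)"
      by (rule Q_eq[OF W_Hs[OF n \<omega>]]) (use YH \<omega> in auto)
    then show "ennreal (norm (Y \<omega> - oproj (W n \<omega>) (Y \<omega>)) powr (2 * s)) = h (Y \<omega>, W n \<omega>)"
      by (simp add: h_def)
  qed
  also have "\<dots> = (\<integral>\<^sup>+p. h p \<partial>distr M (borel \<Otimes>\<^sub>M SS) (\<lambda>x. (Y x, W n x)))"
    by (rule nn_integral_distr[symmetric, OF XY]) (use hM in simp)
  also have "\<dots> = (\<integral>\<^sup>+p. h p \<partial>(?PY \<Otimes>\<^sub>M ?PW))"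
    by (simp only: indep_Y[OF n Y])
  also have "\<dots> = (\<integral>\<^sup>+y. \<integral>\<^sup>+V. h (y, V) \<partial>?PW \<partial>?PY)"
    by (rule PW.nn_integral_fst[symmetric, OF hM'])
  also have "\<dots> = (\<integral>\<^sup>+y. g y \<partial>?PY)" by (simp only: g_eq)
  also have "\<dots> = (\<integral>\<^sup>+\<omega>. g (Y \<omega>) \<partial>M)"
    by (rule nn_integral_distr[OF rY]) (use gM in simp)
  also have "\<dots> \<le> (\<integral>\<^sup>+\<omega>. ennreal (\<alpha> powr s) * ennreal (norm (Y \<omega>) powr (2 * s)) \<partial>M)"
  proof (rule nn_integral_mono)
    fix \<omega> assume \<omega>: "\<omega> \<in> space M"
    show "g (Y \<omega>) \<le> ennreal (\<alpha> powr s) * ennreal (norm (Y \<omega>) powr (2 * s))"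
      unfolding g_def h_def using inner_bound[OF n, of "Y \<omega>"] YH \<omega> by simp
  qed
  also have "\<dots> = ennreal (\<alpha> powr s) * (\<integral>\<^sup>+\<omega>. ennreal (norm (Y \<omega>) powr (2 * s)) \<partial>M)"
    by (rule nn_integral_cmult) (use rY in measurable)
  finally show ?thesis .
qed

end



locale main = setting K M W s \<alpha>
  for K :: "complex set" and M :: "'w measure" and W :: "nat \<Rightarrow> 'w \<Rightarrow> (complex ^ 'd) set" and s \<alpha> :: real +
  fixes noise :: "nat \<Rightarrow> 'w \<Rightarrow> complex ^ 'd" and xs :: "nat \<Rightarrow> 'w \<Rightarrow> complex ^ 'd"
    and x x0 :: "complex ^ 'd" and \<epsilon> :: real
  assumes xH: "x \<in> Hspace K" and x0H: "x0 \<in> Hspace K" and eps: "\<epsilon> \<ge> 0"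
    and alpha: "0 < \<alpha>" "\<alpha> < 1"
    and noise_meas: "\<forall>n\<ge>1. noise n \<in> borel_measurable (history M K W n)"
    and noise_prop: "\<forall>n\<ge>1. \<forall>\<omega>\<in>space M. noise n \<omega> \<in> W n \<omega> \<and> norm (noise n \<omega>) \<le> \<epsilon>"
    and xs0: "\<forall>\<omega>\<in>space M. xs 0 \<omega> = x0"
    and xs_rec: "\<forall>n\<ge>1. \<forall>\<omega>\<in>space M. xs n \<omega> =
           xs (n - 1) \<omega> + (oproj (W n \<omega>) x + noise n \<omega>) - oproj (W n \<omega>) (xs (n - 1) \<omega>)"
begin

lemma xs_H: "\<omega> \<in> space M \<Longrightarrow> xs n \<omega> \<in> Hspace K"
proof (induction n)
  case 0 then show ?case using xs0 x0H by simp
next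
  case (Suc m)
  have HW: "Hsubspace K (W (Suc m) \<omega>)" by (rule W_Hs) (use Suc in auto)
  have eq: "xs (Suc m) \<omega> = xs m \<omega> + (oproj (W (Suc m) \<omega>) x + noise (Suc m) \<omega>) - oproj (W (Suc m) \<omega>) (xs m \<omega>)"
    using xs_rec Suc by auto
  have nW: "noise (Suc m) \<omega> \<in> Hspace K" using noise_prop Suc W_sub[OF HW] by auto
  show ?case unfolding eq
    by (intro Hspace_add Hspace_diff P_H[OF HW] xH nW Suc.IH Suc.prems)
qed

lemma err_decomp: assumes n: "n \<ge> 1" and \<omega>: "\<omega> \<in> space M"
  shows "xs n \<omega> - x = ((xs (n - 1) \<omega> - x) - oproj (W n \<omega>) (xs (n - 1) \<omega> - x)) + noise n \<omega>"
proof -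
  have HW: "Hsubspace K (W n \<omega>)" by (rule W_Hs[OF n \<omega>])
  have e: "oproj (W n \<omega>) (xs (n - 1) \<omega> - x) = oproj (W n \<omega>) (xs (n - 1) \<omega>) - oproj (W n \<omega>) x"
    by (rule P_diff[OF HW xs_H[OF \<omega>] xH])
  have r: "xs n \<omega> = xs (n - 1) \<omega> + (oproj (W n \<omega>) x + noise n \<omega>) - oproj (W n \<omega>) (xs (n - 1) \<omega>)"
    using xs_rec n \<omega> by blast
  show ?thesis unfolding e by (subst r) (simp add: algebra_simps)
qed

lemma norm_decomp: assumes n: "n \<ge> 1" and \<omega>: "\<omega> \<in> space M"
  shows "(norm (xs n \<omega> - x))\<^sup>2 = (norm ((xs (n - 1) \<omega> - x) - oproj (W n \<omega>) (xs (n - 1) \<omega> - x)))\<^sup>2 + (norm (noise n \<omega>))\<^sup>2"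
proof -
  have HW: "Hsubspace K (W n \<omega>)" by (rule W_Hs[OF n \<omega>])
  have YH: "xs (n - 1) \<omega> - x \<in> Hspace K" by (rule Hspace_diff[OF xs_H[OF \<omega>] xH])
  have "noise n \<omega> \<in> W n \<omega>" using noise_prop n \<omega> by auto
  then have "orthogonal ((xs (n - 1) \<omega> - x) - oproj (W n \<omega>) (xs (n - 1) \<omega> - x)) (noise n \<omega>)"
    using P_orth_inner[OF HW YH] by (simp add: orthogonal_def)
  from norm_add_Pythagorean[OF this] show ?thesis by (simp only: err_decomp[OF n \<omega>])
qed

lemma res_le: assumes n: "n \<ge> 1" and \<omega>: "\<omega> \<in> space M"
  shows "(norm ((xs (n - 1) \<omega> - x) - oproj (W n \<omega>) (xs (n - 1) \<omega> - x)))\<^sup>2 \<le> (norm (xs (n - 1) \<omega> - x))\<^sup>2"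
proof -
  have HW: "Hsubspace K (W n \<omega>)" by (rule W_Hs[OF n \<omega>])
  have YH: "xs (n - 1) \<omega> - x \<in> Hspace K" by (rule Hspace_diff[OF xs_H[OF \<omega>] xH])
  show ?thesis using pyth[OF HW YH] by simp
qed

lemma noise_sq: assumes n: "n \<ge> 1" and \<omega>: "\<omega> \<in> space M"
  shows "(norm (noise n \<omega>))\<^sup>2 \<le> \<epsilon>\<^sup>2"
  using noise_prop n \<omega> by (intro power_mono) auto

lemma err_bound: "\<omega> \<in> space M \<Longrightarrow> (norm (xs n \<omega> - x))\<^sup>2 \<le> (norm (x0 - x))\<^sup>2 + real n * \<epsilon>\<^sup>2"
proof (induction n)
  case 0 then show ?case using xs0 by simp
next
  case (Suc m)
  let ?A = "norm (xs m \<omega> - x - oproj (W (Suc m) \<omega>) (xs m \<omega> - x))"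
  have a: "(norm (xs (Suc m) \<omega> - x))\<^sup>2 = ?A\<^sup>2 + (norm (noise (Suc m) \<omega>))\<^sup>2"
    using norm_decomp[of "Suc m" \<omega>, OF _ Suc.prems] by simp
  have b: "?A\<^sup>2 \<le> (norm (xs m \<omega> - x))\<^sup>2"
    using res_le[of "Suc m" \<omega>, OF _ Suc.prems] by simp
  have c: "(norm (noise (Suc m) \<omega>))\<^sup>2 \<le> \<epsilon>\<^sup>2"
    using noise_sq[of "Suc m" \<omega>, OF _ Suc.prems] by simp
  have "(norm (xs (Suc m) \<omega> - x))\<^sup>2 \<le> (norm (xs m \<omega> - x))\<^sup>2 + \<epsilon>\<^sup>2"
    using a b c by linarith
  then show ?case using Suc by (simp add: algebra_simps)
qed

lemma Q_comp: "f \<in> borel_measurable N \<Longrightarrow> V \<in> measurable N SS \<Longrightarrow> (\<lambda>\<omega>. Q (V \<omega>) (f \<omega>)) \<in> borel_measurable N"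
  using measurable_compose[OF measurable_Pair Q_meas, of f N V] by simp

lemma xs_meas: "xs n \<in> borel_measurable (history M K W n)"
proof (induction n)
  case 0
  have "(\<lambda>_. x0) \<in> borel_measurable (history M K W 0)" by simp
  then show ?case by (rule measurable_cong[THEN iffD1, rotated]) (use xs0 hist_space in auto)
next
  case (Suc m)
  let ?H = "history M K W (Suc m)"
  have xm: "xs m \<in> borel_measurable ?H" by (rule hist_mono[OF _ Suc.IH]) simp
  have WH: "W (Suc m) \<in> measurable ?H SS" by (rule W_hist) auto
  have nm: "noise (Suc m) \<in> borel_measurable ?H" using noise_meas by simp
  have "(\<lambda>\<omega>. xs m \<omega> + (Q (W (Suc m) \<omega>) x + noise (Suc m) \<omega>) - Q (W (Suc m) \<omega>) (xs m \<omega>)) \<in> borel_measurable ?H"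
    by (intro borel_measurable_add borel_measurable_diff xm nm Q_comp[OF _ WH] borel_measurable_const)
  moreover have "xs m \<omega> + (Q (W (Suc m) \<omega>) x + noise (Suc m) \<omega>) - Q (W (Suc m) \<omega>) (xs m \<omega>) = xs (Suc m) \<omega>"
    if "\<omega> \<in> space ?H" for \<omega>
  proof -
    have \<omega>: "\<omega> \<in> space M" using that hist_space by simp
    have HW: "Hsubspace K (W (Suc m) \<omega>)" by (rule W_Hs[OF _ \<omega>]) simp
    show ?thesis using xs_rec \<omega> Q_eq[OF HW xH] Q_eq[OF HW xs_H[OF \<omega>]] by simp
  qed
  ultimately show ?case by (rule measurable_cong[THEN iffD1, rotated]) 
qed

lemma Y_meas: "(\<lambda>\<omega>. xs n \<omega> - x) \<in> borel_measurable (history M K W n)"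
  by (intro borel_measurable_diff xs_meas borel_measurable_const)

lemma Y_measM: "(\<lambda>\<omega>. xs n \<omega> - x) \<in> borel_measurable M"
  by (rule hist_to_M[OF Y_meas])

end



context main begin

abbreviation "c n \<equiv> (\<integral>\<omega>. norm (xs n \<omega> - x) powr (2 * s) \<partial>M)"
abbreviation "R n \<omega> \<equiv> norm ((xs (n - 1) \<omega> - x) - oproj (W n \<omega>) (xs (n - 1) \<omega> - x))"
abbreviation "B n \<equiv> (norm (x0 - x))\<^sup>2 + real n * \<epsilon>\<^sup>2"

lemma phi_meas: "(\<lambda>\<omega>. norm (xs n \<omega> - x) powr (2 * s)) \<in> borel_measurable M"
proof -
  have [measurable]: "(\<lambda>\<omega>. xs n \<omega> - x) \<in> borel_measurable M" by (rule Y_measM)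
  show ?thesis by measurable
qed

lemma phi_bound: assumes "\<omega> \<in> space M"
  shows "0 \<le> norm (xs n \<omega> - x) powr (2 * s) \<and> norm (xs n \<omega> - x) powr (2 * s) \<le> B n powr s"
proof
  show "0 \<le> norm (xs n \<omega> - x) powr (2 * s)" by simp
  have "norm (xs n \<omega> - x) powr (2 * s) = ((norm (xs n \<omega> - x))\<^sup>2) powr s" by (rule powr_2s) simp
  also have "\<dots> \<le> B n powr s" by (rule powr_mono2) (use s_pos err_bound[OF assms, of n] in auto)
  finally show "norm (xs n \<omega> - x) powr (2 * s) \<le> B n powr s" .
qed

lemma phi_int: "integrable M (\<lambda>\<omega>. norm (xs n \<omega> - x) powr (2 * s))"
  by (rule integrable_const_bound[where B="B n powr s"]) (use phi_bound phi_meas in auto)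

lemma c_nonneg: "0 \<le> c n" by (rule integral_nonneg_AE) simp

lemma c0: "c 0 = norm (x0 - x) powr (2 * s)"
proof -
  have "c 0 = (\<integral>\<omega>. norm (x0 - x) powr (2 * s) \<partial>M)"
    by (rule Bochner_Integration.integral_cong[OF refl]) (use xs0 in auto)
  then show ?thesis by (simp add: prob_space)
qed

lemma R_meas: assumes n: "n \<ge> 1" shows "(\<lambda>\<omega>. R n \<omega> powr (2 * s)) \<in> borel_measurable M"
proof -
  have Y[measurable]: "(\<lambda>\<omega>. xs (n - 1) \<omega> - x) \<in> borel_measurable M" by (rule Y_measM)
  have [measurable]: "(\<lambda>\<omega>. Q (W n \<omega>) (xs (n - 1) \<omega> - x)) \<in> borel_measurable M"
    by (rule Q_comp[OF Y W_meas[OF n]])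
  have "(\<lambda>\<omega>. norm ((xs (n - 1) \<omega> - x) - Q (W n \<omega>) (xs (n - 1) \<omega> - x)) powr (2 * s)) \<in> borel_measurable M"
    by measurable
  moreover have "norm ((xs (n - 1) \<omega> - x) - Q (W n \<omega>) (xs (n - 1) \<omega> - x)) powr (2 * s) = R n \<omega> powr (2 * s)"
    if \<omega>: "\<omega> \<in> space M" for \<omega>
    using Q_eq[OF W_Hs[OF n \<omega>] Hspace_diff[OF xs_H[OF \<omega>] xH]] by simp
  ultimately show ?thesis by (rule measurable_cong[THEN iffD1, rotated]) 
qed

lemma R_bound: assumes n: "n \<ge> 1" and \<omega>: "\<omega> \<in> space M"
  shows "R n \<omega> powr (2 * s) \<le> B (n - 1) powr s"
proof -
  have "R n \<omega> powr (2 * s) = ((R n \<omega>)\<^sup>2) powr s" by (rule powr_2s) simp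
  also have "\<dots> \<le> B (n - 1) powr s"
    by (rule powr_mono2) (use s_pos order_trans[OF res_le[OF n \<omega>] err_bound[OF \<omega>, of "n - 1"]] in auto)
  finally show ?thesis .
qed

lemma R_int: assumes n: "n \<ge> 1" shows "integrable M (\<lambda>\<omega>. R n \<omega> powr (2 * s))"
  by (rule integrable_const_bound[where B="B (n - 1) powr s"]) (use R_bound[OF n] R_meas[OF n] in auto)

lemma IND_real: assumes n: "n \<ge> 1"
  shows "(\<integral>\<omega>. R n \<omega> powr (2 * s) \<partial>M) \<le> \<alpha> powr s * c (n - 1)"
proof -
  have YH: "\<forall>\<omega>\<in>space M. xs (n - 1) \<omega> - x \<in> Hspace K"
    using Hspace_diff[OF xs_H xH] by blast
  have I: "(\<integral>\<^sup>+\<omega>. ennreal (R n \<omega> powr (2 * s)) \<partial>M)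
         \<le> ennreal (\<alpha> powr s) * (\<integral>\<^sup>+\<omega>. ennreal (norm (xs (n - 1) \<omega> - x) powr (2 * s)) \<partial>M)"
    using IND[OF n Y_meas[of "n - 1"] YH] by simp
  have l: "(\<integral>\<^sup>+\<omega>. ennreal (R n \<omega> powr (2 * s)) \<partial>M) = ennreal (\<integral>\<omega>. R n \<omega> powr (2 * s) \<partial>M)"
    by (rule nn_integral_eq_integral[OF R_int[OF n]]) simp
  have r: "(\<integral>\<^sup>+\<omega>. ennreal (norm (xs (n - 1) \<omega> - x) powr (2 * s)) \<partial>M) = ennreal (c (n - 1))"
    by (rule nn_integral_eq_integral[OF phi_int]) simp
  have "ennreal (\<integral>\<omega>. R n \<omega> powr (2 * s) \<partial>M) \<le> ennreal (\<alpha> powr s * c (n - 1))"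
    using I unfolding l r by (simp add: ennreal_mult c_nonneg)
  then show ?thesis using c_nonneg by (simp add: ennreal_le_iff)
qed

lemma phi_decomp: assumes n: "n \<ge> 1" and \<omega>: "\<omega> \<in> space M"
  shows "norm (xs n \<omega> - x) powr (2 * s) \<le> ((R n \<omega>)\<^sup>2 + \<epsilon>\<^sup>2) powr s"
proof -
  have "norm (xs n \<omega> - x) powr (2 * s) = ((norm (xs n \<omega> - x))\<^sup>2) powr s" by (rule powr_2s) simp
  also have "\<dots> \<le> ((R n \<omega>)\<^sup>2 + \<epsilon>\<^sup>2) powr s"
    by (rule powr_mono2) (use s_pos norm_decomp[OF n \<omega>] noise_sq[OF n \<omega>] in auto)
  finally show ?thesis .
qed

lemma rec1: assumes s1: "s \<le> 1" and n: "n \<ge> 1"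
  shows "c n \<le> \<alpha> powr s * c (n - 1) + \<epsilon> powr (2 * s)"
proof -
  have pt: "norm (xs n \<omega> - x) powr (2 * s) \<le> R n \<omega> powr (2 * s) + \<epsilon> powr (2 * s)" if \<omega>: "\<omega> \<in> space M" for \<omega>
  proof -
    have "norm (xs n \<omega> - x) powr (2 * s) \<le> ((R n \<omega>)\<^sup>2 + \<epsilon>\<^sup>2) powr s" by (rule phi_decomp[OF n \<omega>])
    also have "\<dots> \<le> ((R n \<omega>)\<^sup>2) powr s + (\<epsilon>\<^sup>2) powr s" by (rule powr_subadd) (use s_pos s1 in auto)
    also have "\<dots> = R n \<omega> powr (2 * s) + \<epsilon> powr (2 * s)" using powr_2s[of "R n \<omega>" s] powr_2s[OF eps, of s] by simp
    finally show ?thesis .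
  qed
  have "c n \<le> (\<integral>\<omega>. R n \<omega> powr (2 * s) + \<epsilon> powr (2 * s) \<partial>M)"
    by (rule integral_mono[OF phi_int]) (use R_int[OF n] pt in auto)
  also have "\<dots> = (\<integral>\<omega>. R n \<omega> powr (2 * s) \<partial>M) + \<epsilon> powr (2 * s)"
    using R_int[OF n] by (simp add: prob_space)
  also have "\<dots> \<le> \<alpha> powr s * c (n - 1) + \<epsilon> powr (2 * s)" using IND_real[OF n] by simp
  finally show ?thesis .
qed

lemma rec2: assumes s1: "1 \<le> s" and n: "n \<ge> 1"
  shows "c n powr (1 / s) \<le> \<alpha> * c (n - 1) powr (1 / s) + \<epsilon>\<^sup>2"
proof -
  define a where "a = \<alpha> * c (n - 1) powr (1 / s)"
  define e where "e = \<epsilon>\<^sup>2"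
  define I where "I = (\<integral>\<omega>. R n \<omega> powr (2 * s) \<partial>M)"
  have a0: "0 \<le> a" unfolding a_def using alpha by simp
  have e0: "0 \<le> e" unfolding e_def by simp
  have I0: "0 \<le> I" unfolding I_def by (rule integral_nonneg_AE) simp
  have "a powr s = \<alpha> powr s * (c (n - 1) powr (1 / s)) powr s" unfolding a_def using alpha
    by (simp add: powr_mult)
  also have "(c (n - 1) powr (1 / s)) powr s = c (n - 1)" using s_pos c_nonneg by (simp add: powr_powr)
  finally have Ia: "I \<le> a powr s" using IND_real[OF n] unfolding I_def by simp
  have pt: "norm (xs n \<omega> - x) powr (2 * s) \<le> ((R n \<omega>)\<^sup>2 + e) powr s" if "\<omega> \<in> space M" for \<omega>
    unfolding e_def by (rule phi_decomp[OF n that])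
  have Rs: "((R n \<omega>)\<^sup>2) powr s = R n \<omega> powr (2 * s)" for \<omega> using powr_2s[of "R n \<omega>" s] by simp
  have main: "c n \<le> (a + e) powr s"
  proof (cases "e = 0")
    case True
    have "c n \<le> I" unfolding I_def
      by (rule integral_mono[OF phi_int R_int[OF n]]) (use pt True Rs in auto)
    then show ?thesis using Ia True by simp
  next
    case en: False
    then have ep: "e > 0" using e0 by simp
    show ?thesis
    proof (cases "a = 0")
      case True
      then have "I = 0" using Ia I0 s_pos by simp
      then have "AE \<omega> in M. R n \<omega> powr (2 * s) = 0"
        unfolding I_def using integral_nonneg_eq_0_iff_AE[OF R_int[OF n]] by simp
      then have ae: "AE \<omega> in M. norm (xs n \<omega> - x) powr (2 * s) \<le> e powr s"
      proof (rule AE_mp[OF _ AE_I2])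
        fix \<omega> assume \<omega>: "\<omega> \<in> space M"
        show "R n \<omega> powr (2 * s) = 0 \<longrightarrow> norm (xs n \<omega> - x) powr (2 * s) \<le> e powr s"
        proof
          assume "R n \<omega> powr (2 * s) = 0"
          then have z: "(R n \<omega>)\<^sup>2 = 0" by simp
          show "norm (xs n \<omega> - x) powr (2 * s) \<le> e powr s" using pt[OF \<omega>] unfolding z by simp
        qed
      qed
      have "c n \<le> (\<integral>\<omega>. e powr s \<partial>M)" by (rule integral_mono_AE[OF phi_int _ ae]) simp
      then show ?thesis using True by (simp add: prob_space)
    next
      case an: False
      then have ap: "a > 0" using a0 by simp
      define t where "t = e / (a + e)"
      have t: "0 < t" "t < 1" unfolding t_def using ap ep by (auto simp: field_simps)
      let ?k1 = "(1 - t) powr (1 - s)" and ?k2 = "t powr (1 - s)"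
      have pt2: "norm (xs n \<omega> - x) powr (2 * s) \<le> ?k1 * R n \<omega> powr (2 * s) + ?k2 * e powr s"
        if \<omega>: "\<omega> \<in> space M" for \<omega>
      proof -
        have "((R n \<omega>)\<^sup>2 + e) powr s \<le> ?k1 * ((R n \<omega>)\<^sup>2) powr s + ?k2 * e powr s"
          by (rule powr_convex_split) (use e0 t s1 in auto)
        then show ?thesis using pt[OF \<omega>] Rs[of \<omega>] by simp
      qed
      have int2: "integrable M (\<lambda>\<omega>. ?k1 * R n \<omega> powr (2 * s) + ?k2 * e powr s)"
        using R_int[OF n] by simp
      have "c n \<le> (\<integral>\<omega>. ?k1 * R n \<omega> powr (2 * s) + ?k2 * e powr s \<partial>M)"
        by (rule integral_mono[OF phi_int int2]) (use pt2 in auto)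
      also have "\<dots> = ?k1 * I + ?k2 * e powr s"
        unfolding I_def using R_int[OF n] by (simp add: prob_space)
      also have "\<dots> \<le> ?k1 * a powr s + ?k2 * e powr s"
        using Ia by (simp add: mult_left_mono)
      also have "\<dots> = (a + e) powr s" unfolding t_def by (rule powr_pick[OF ap ep])
      finally show ?thesis .
    qed
  qed
  have "c n powr (1 / s) \<le> ((a + e) powr s) powr (1 / s)"
    by (rule powr_mono2) (use s_pos c_nonneg main in auto)
  also have "\<dots> = a + e" using s_pos a0 e0 by (simp add: powr_powr)
  finally show ?thesis unfolding a_def e_def .
qed

lemma final1: assumes s1: "s \<le> 1"
  shows "c n \<le> \<alpha> powr (real n * s) * norm (x0 - x) powr (2 * s) + 1 / (1 - \<alpha> powr s) * \<epsilon> powr (2 * s)"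
proof -
  define q where "q = \<alpha> powr s"
  define E where "E = \<epsilon> powr (2 * s)"
  have q0: "0 < q" unfolding q_def using alpha by simp
  have q1: "q < 1"
  proof -
    have "\<alpha> powr s < 1 powr s" by (rule powr_less_mono2) (use alpha s_pos in auto)
    then show ?thesis unfolding q_def by simp
  qed
  have E0: "0 \<le> E" unfolding E_def by simp
  have qn: "\<alpha> powr (real m * s) = q ^ m" for m
  proof -
    have "\<alpha> powr (real m * s) = (\<alpha> powr s) powr (real m)" by (simp add: powr_powr mult.commute)
    also have "\<dots> = q ^ m" unfolding q_def using q0[unfolded q_def] by (simp add: powr_realpow)
    finally show ?thesis .
  qed
  have "c n \<le> q ^ n * c 0 + E / (1 - q)"
  proof (induction n)
    case 0 then show ?case using E0 q1 by simp
  next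
    case (Suc m)
    have "c (Suc m) \<le> q * c m + E" using rec1[OF s1, of "Suc m"] unfolding q_def E_def by simp
    also have "\<dots> \<le> q * (q ^ m * c 0 + E / (1 - q)) + E" using Suc q0 by simp
    also have "\<dots> = q ^ Suc m * c 0 + E / (1 - q)" using q1 by (simp add: field_simps)
    finally show ?case .
  qed
  then show ?thesis unfolding qn c0 E_def q_def by simp
qed

lemma final2: assumes s1: "1 \<le> s"
  shows "c n powr (1 / s) \<le> \<alpha> ^ n * (norm (x0 - x))\<^sup>2 + 1 / (1 - \<alpha>) * \<epsilon>\<^sup>2"
proof -
  define E where "E = \<epsilon>\<^sup>2"
  have E0: "0 \<le> E" unfolding E_def by simp
  have a0: "c 0 powr (1 / s) = (norm (x0 - x))\<^sup>2"
  proof -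
    have "c 0 powr (1 / s) = norm (x0 - x) powr 2" unfolding c0 using s_pos by (simp add: powr_powr)
    also have "\<dots> = (norm (x0 - x))\<^sup>2" using powr_2s[of "norm (x0 - x)" 1] by simp
    finally show ?thesis .
  qed
  have "c n powr (1 / s) \<le> \<alpha> ^ n * c 0 powr (1 / s) + E / (1 - \<alpha>)"
  proof (induction n)
    case 0 then show ?case using E0 alpha by simp
  next
    case (Suc m)
    have "c (Suc m) powr (1 / s) \<le> \<alpha> * c m powr (1 / s) + E" using rec2[OF s1, of "Suc m"] unfolding E_def by simp
    also have "\<dots> \<le> \<alpha> * (\<alpha> ^ m * c 0 powr (1 / s) + E / (1 - \<alpha>)) + E" using Suc alpha by simp
    also have "\<dots> = \<alpha> ^ Suc m * c 0 powr (1 / s) + E / (1 - \<alpha>)" using alpha by (simp add: field_simps)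
    finally show ?case .
  qed
  then show ?thesis unfolding a0 E_def by simp
qed

end


theorem theorem3p3:
  fixes M :: "'w measure" and K :: "complex set"
    and W :: "nat \<Rightarrow> 'w \<Rightarrow> (complex ^ 'd) set"
    and noise :: "nat \<Rightarrow> 'w \<Rightarrow> complex ^ 'd"
    and xs :: "nat \<Rightarrow> 'w \<Rightarrow> complex ^ 'd"
    and x x0 :: "complex ^ 'd" and s \<alpha> \<epsilon> :: real
  assumes "prob_space M"
    and "K = \<real> \<or> K = UNIV"
    and "x \<in> Hspace K" and "x0 \<in> Hspace K"
    and "prob_space.indep_vars M (\<lambda>_. subspaces K) W {1..}"
    and "s > 0"
    and "\<forall>n\<ge>1. kaczmarz_bound M K s (W n) = \<alpha>"
    and "0 < \<alpha>" and "\<alpha> < 1"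
    and "\<epsilon> \<ge> 0"
    and "\<forall>n\<ge>1. noise n \<in> borel_measurable (history M K W n)"
    and "\<forall>n\<ge>1. \<forall>\<omega>\<in>space M. noise n \<omega> \<in> W n \<omega> \<and> norm (noise n \<omega>) \<le> \<epsilon>"
    and "\<forall>\<omega>\<in>space M. xs 0 \<omega> = x0"
    and "\<forall>n\<ge>1. \<forall>\<omega>\<in>space M. xs n \<omega> =
           xs (n - 1) \<omega> + (oproj (W n \<omega>) x + noise n \<omega>) - oproj (W n \<omega>) (xs (n - 1) \<omega>)"
  shows "(s \<le> 1 \<longrightarrow> (\<forall>n. (\<integral>\<omega>. norm (xs n \<omega> - x) powr (2 * s) \<partial>M)
            \<le> \<alpha> powr (real n * s) * norm (x0 - x) powr (2 * s)
               + 1 / (1 - \<alpha> powr s) * \<epsilon> powr (2 * s)))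
       \<and> (s \<ge> 1 \<longrightarrow> (\<forall>n. (\<integral>\<omega>. norm (xs n \<omega> - x) powr (2 * s) \<partial>M) powr (1 / s)
            \<le> \<alpha> ^ n * (norm (x0 - x))\<^sup>2 + 1 / (1 - \<alpha>) * \<epsilon>\<^sup>2))"
  proof -
  interpret main K M W s \<alpha> noise xs x x0 \<epsilon>
    unfolding main_def main_axioms_def setting_def setting_axioms_def KK_def
    by (intro conjI) (rule assms)+
  show ?thesis using final1 final2 by blast
qed


end
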